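(* Let $N=[n(i,j)]$, $\mathfrak h$, $\alpha_i$, $\mathcal A$, $F$, $v_1,\dots,v_r$ be as in the context. Suppose $\delta_1,\dots,\delta_r,\delta_{-1},\dots,\delta_{-r}\in\mathrm{Im}\,F$ are such that, with $\mathbf X_i=v_i\delta_i$ and $\mathbf X_{-i}=v_i^{-1}\delta_{-i}$, one has $[\mathbf X_i,\mathbf X_{-i}]=F(H_i)$ for all $i$ and $[\mathbf X_i,\mathbf X_{-j}]=0$ for $i\neq j$. Then also, for all $i\neq j$, $$\mathrm{ad}(\mathbf X_i)^{1-n(i,j)}(\mathbf X_j)=0\quad\text{and}\quad \mathrm{ad}(\mathbf X_{-i})^{1-n(i,j)}(\mathbf X_{-j})=0$$ in $\mathrm{Der}(\mathcal A)$.
   Context: A generalised Cartan matrix is $N=[n(i,j)]_{1\le i,j\le r}$ with $n(i,j)\in\mathbb Z$, $n(i,i)=2$, $n(i,j)\le 0$ for $i\neq j$, and $n(i,j)=0\iff n(j,i)=0$. Let $s$ be the corank of $N$, $\mathfrak h$ the complex vector space with basis $H_1,\dots,H_{r+s}$, and $\alpha_1,\dots,\alpha_r\in\mathfrak h^*$ linearly independent with $\alpha_j(H_i)=n(i,j)$ for $1\le i,j\le r$. $\mathcal A$ is a complex commutative algebra, $\mathrm{Der}(\mathcal A)$ its Lie algebra of derivations (commutator bracket); for $a\in\mathcal A$, $D\in\mathrm{Der}(\mathcal A)$, $aD$ is $b\mapsto aD(b)$. $F:\mathfrak h\to\mathrm{Der}(\mathcal A)$ is a Lie algebra homomorphism ($\mathfrak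 h$ abelian) and $v_1,\dots,v_r\in\mathcal A$ are invertible with $F(H)(v_i)=\alpha_i(H)v_i$ for all $H\in\mathfrak h$. *)

theory Defs
  imports Complex_Main
begin

definition gen_cartan :: "nat \<Rightarrow> (nat \<Rightarrow> nat \<Rightarrow> int) \<Rightarrow> bool" where
  "gen_cartan r N \<longleftrightarrow>
     (\<forall>i\<in>{1..r}. N i i = 2) \<and>
     (\<forall>i\<in>{1..r}. \<forall>j\<in>{1..r}. i \<noteq> j \<longrightarrow> N i j \<le> 0) \<and>
     (\<forall>i\<in>{1..r}. \<forall>j\<in>{1..r}. N i j = 0 \<longleftrightarrow> N j i = 0)"

definition cols_indep :: "nat \<Rightarrow> (nat \<Rightarrow> nat \<Rightarrow> int) \<Rightarrow> nat set \<Rightarrow> bool" where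
  "cols_indep r N S \<longleftrightarrow>
     (\<forall>l::nat \<Rightarrow> complex. (\<forall>i\<in>{1..r}. (\<Sum>j\<in>S. l j * of_int (N i j)) = 0)
        \<longrightarrow> (\<forall>j\<in>S. l j = 0))"

definition mat_rank :: "nat \<Rightarrow> (nat \<Rightarrow> nat \<Rightarrow> int) \<Rightarrow> nat" where
  "mat_rank r N = Max {card S | S. S \<subseteq> {1..r} \<and> cols_indep r N S}"

definition corank :: "nat \<Rightarrow> (nat \<Rightarrow> nat \<Rightarrow> int) \<Rightarrow> nat" where
  "corank r N = r - mat_rank r N"

section \<open>The Cartan subalgebra h = C^m with basis H_1..H_m (coordinates)\<close>

definition hspace :: "nat \<Rightarrow> (nat \<Rightarrow> complex) set" where
  "hspace m = {c. \<forall>k. k \<notin> {1..m} \<longrightarrow> c k = 0}"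

definition Hb :: "nat \<Rightarrow> nat \<Rightarrow> complex" where
  "Hb k = (\<lambda>l. if l = k then 1 else 0)"

text \<open>A complex commutative algebra: a commutative ring 'a together with a unital ring
  homomorphism phi from the complex numbers (scalar multiplication z.a = phi z * a).\<close>
definition complex_alg_hom :: "(complex \<Rightarrow> 'a::comm_ring_1) \<Rightarrow> bool" where
  "complex_alg_hom phi \<longleftrightarrow> phi 1 = 1 \<and>
     (\<forall>x y. phi (x + y) = phi x + phi y) \<and> (\<forall>x y. phi (x * y) = phi x * phi y)"

definition is_derivation :: "(complex \<Rightarrow> 'a::comm_ring_1) \<Rightarrow> ('a \<Rightarrow> 'a) \<Rightarrow> bool" where
  "is_derivation phi D \<longleftrightarrow>
     (\<forall>a b. D (a + b) = D a + D b) \<and>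
     (\<forall>z a. D (phi z * a) = phi z * D a) \<and>
     (\<forall>a b. D (a * b) = a * D b + D a * b)"

definition lie_br :: "('a::comm_ring_1 \<Rightarrow> 'a) \<Rightarrow> ('a \<Rightarrow> 'a) \<Rightarrow> ('a \<Rightarrow> 'a)" where
  "lie_br D E = (\<lambda>b. D (E b) - E (D b))"

definition lmult :: "'a::comm_ring_1 \<Rightarrow> ('a \<Rightarrow> 'a) \<Rightarrow> ('a \<Rightarrow> 'a)" where
  "lmult a D = (\<lambda>b. a * D b)"

end

theory Submission
  imports Defs
begin


locale dctx =
  fixes phi :: "complex \<Rightarrow> 'a::comm_ring_1" and F :: "(nat\<Rightarrow>complex) \<Rightarrow> 'a \<Rightarrow> 'a"
    and H :: "(nat\<Rightarrow>complex) set"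
  assumes phi_hom: "complex_alg_hom phi"
    and F_der: "\<forall>c\<in>H. is_derivation phi (F c)"
    and F_lin: "\<forall>c\<in>H. \<forall>d\<in>H. \<forall>z. F (\<lambda>k. c k + z * d k) = (\<lambda>b. F c b + phi z * F d b)"
    and F_br: "\<forall>c\<in>H. \<forall>d\<in>H. lie_br (F c) (F d) = (\<lambda>_. 0)"
    and H_zero: "(\<lambda>_. 0) \<in> H"
    and H_comb: "\<forall>c\<in>H. \<forall>d\<in>H. \<forall>x y. (\<lambda>k. x * c k + y * d k) \<in> H"
begin

lemma phi_add: "phi (x + y) = phi x + phi y" and phi_mult: "phi (x * y) = phi x * phi y"
  and phi_1: "phi 1 = 1"
  using phi_hom by (auto simp: complex_alg_hom_def)

lemma phi_0: "phi 0 = 0"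
  using phi_add[of 0 0] by simp

lemma phi_neg: "phi (- x) = - phi x"
  using phi_add[of x "-x"] phi_0 by (metis neg_eq_iff_add_eq_0 add.right_inverse)

lemma der_add: "c \<in> H \<Longrightarrow> F c (a + b) = F c a + F c b"
  and der_mult: "c \<in> H \<Longrightarrow> F c (a * b) = a * F c b + F c a * b"
  using F_der by (auto simp: is_derivation_def)

lemma der_zero: "c \<in> H \<Longrightarrow> F c 0 = 0"
  using der_add[of c 0 0] by simp

lemma der_comm: "c \<in> H \<Longrightarrow> d \<in> H \<Longrightarrow> F c (F d b) = F d (F c b)"
  using fun_cong[OF F_br[rule_format, of c d], of b] by (simp add: lie_br_def)

lemma F_zero: "F (\<lambda>_. 0) b = 0"
proof -
  have "F (\<lambda>k. 0 + 1 * 0) b = F (\<lambda>_. 0) b + phi 1 * F (\<lambda>_. 0) b"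
    using fun_cong[OF F_lin[rule_format, OF H_zero H_zero, of 1], of b] by simp
  thus ?thesis by (simp add: phi_1)
qed

lemma F_comb: assumes "c \<in> H" "d \<in> H"
  shows "F (\<lambda>k. x * c k + y * d k) b = phi x * F c b + phi y * F d b"
proof -
  have cx: "(\<lambda>k. x * c k) \<in> H" using H_comb[rule_format, OF assms(1) assms(1), of x 0] by simp
  have "F (\<lambda>k. 0 + x * c k) b = F (\<lambda>_. 0) b + phi x * F c b"
    using fun_cong[OF F_lin[rule_format, OF H_zero assms(1), of x], of b] by simp
  hence 1: "F (\<lambda>k. x * c k) b = phi x * F c b" by (simp add: F_zero)
  have "F (\<lambda>k. x * c k + y * d k) b = F (\<lambda>k. x * c k) b + phi y * F d b"
    using fun_cong[OF F_lin[rule_format, OF cx assms(2), of y], of b] by simp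
  thus ?thesis using 1 by simp
qed

lemma step:
  assumes "c \<in> H" "e \<in> H" "F c w = phi \<beta> * w" "F e u = phi \<gamma> * u"
  shows "lie_br (lmult u (F c)) (lmult w (F e)) = lmult (u * w) (F (\<lambda>k. \<beta> * e k + (- \<gamma>) * c k))"
proof
  fix b
  have fc: "F (\<lambda>k. \<beta> * e k - \<gamma> * c k) b = phi \<beta> * F e b - phi \<gamma> * F c b"
    using F_comb[OF assms(2,1), of \<beta> "-\<gamma>" b] by (simp add: phi_neg)
  show "lie_br (lmult u (F c)) (lmult w (F e)) b = lmult (u * w) (F (\<lambda>k. \<beta> * e k + - \<gamma> * c k)) b"
    unfolding lie_br_def lmult_def
    using assms der_mult[of c w "F e b"] der_mult[of e u "F c b"] der_comm[of c e b]
    by (simp add: fc algebra_simps)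
qed

lemma lmult_zero: "lmult u (\<lambda>_. 0) = (\<lambda>_. 0)"
  by (simp add: lmult_def)

lemma funpow_zero:
  assumes "c \<in> H" "(lie_br (lmult u (F c)) ^^ k) Y = (\<lambda>_. 0)" "k \<le> m"
  shows "(lie_br (lmult u (F c)) ^^ m) Y = (\<lambda>_. 0)"
proof -
  have z: "lie_br (lmult u (F c)) (\<lambda>_. 0) = (\<lambda>_. 0)"
    using der_zero[OF assms(1)] by (simp add: lie_br_def lmult_def)
  have "((lie_br (lmult u (F c))) ^^ n) (\<lambda>_. 0) = (\<lambda>_. 0)" for n
    by (induction n) (simp_all add: z)
  moreover have "m = (m - k) + k" using assms(3) by simp
  ultimately show ?thesis using assms(2)
    by (metis funpow_add comp_apply)
qed

lemma nil:
  assumes ci: "ci \<in> H" and cj: "cj \<in> H"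
    and wi: "\<forall>e\<in>H. F e ui = phi (bi e) * ui" and wj: "\<forall>e\<in>H. F e uj = phi (bj e) * uj"
    and lin: "\<forall>c\<in>H. \<forall>d\<in>H. \<forall>x y. bi (\<lambda>k. x * c k + y * d k) = x * bi c + y * bi d"
    and cond: "(bj ci = 0 \<and> (bi cj = 0 \<or> 2 \<le> m)) \<or> (bj ci = - bi ci \<and> (3 \<le> m \<or> (bi cj = 0 \<and> 2 \<le> m)))"
    and m1: "1 \<le> m"
  shows "(lie_br (lmult ui (F ci)) ^^ m) (lmult uj (F cj)) = (\<lambda>_. 0)"
proof -
  define X where "X = lmult ui (F ci)"
  define Y where "Y = lmult uj (F cj)"
  define A where "A = bi ci"
  define B where "B = bj ci"
  define a where "a = bi cj"
  define e1 where "e1 = (\<lambda>k. B * cj k + (- a) * ci k)"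
  have e1H: "e1 \<in> H" unfolding e1_def using H_comb ci cj by blast
  have s1: "lie_br X Y = lmult (ui * uj) (F e1)"
    unfolding X_def Y_def e1_def
    by (rule step[OF ci cj]) (use wi wj ci cj in \<open>auto simp: B_def a_def\<close>)
  have be1: "bi e1 = B * a + (- a) * A" unfolding e1_def using lin[rule_format, OF cj ci, of B "-a"] by (simp add: A_def a_def)
  have w2: "F ci (ui * uj) = phi (A + B) * (ui * uj)"
    using der_mult[OF ci, of ui uj] wi wj ci by (simp add: A_def B_def phi_add algebra_simps)
  define e2 where "e2 = (\<lambda>k. (A + B) * e1 k + (- bi e1) * ci k)"
  have e2H: "e2 \<in> H" unfolding e2_def using H_comb ci e1H by blast
  have s2: "lie_br X (lie_br X Y) = lmult (ui * (ui * uj)) (F e2)"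
    unfolding s1 unfolding X_def e2_def
    by (rule step[OF ci e1H]) (use wi e1H w2 in auto)
  have be2: "bi e2 = (A + B) * bi e1 + (- bi e1) * A" unfolding e2_def using lin[rule_format, OF e1H ci, of "A+B" "- bi e1"] by (simp add: A_def)
  have w3: "F ci (ui * (ui * uj)) = phi (A + (A + B)) * (ui * (ui * uj))"
  proof -
    have "F ci (ui * (ui * uj)) = ui * (phi (A + B) * (ui * uj)) + phi A * ui * (ui * uj)"
      using der_mult[OF ci, of ui "ui * uj"] w2 wi ci by (simp add: A_def)
    thus ?thesis by (simp only: phi_add[of A "A+B"]) (simp add: algebra_simps)
  qed
  define e3 where "e3 = (\<lambda>k. (A + (A + B)) * e2 k + (- bi e2) * ci k)"
  have s3: "lie_br X (lie_br X (lie_br X Y)) = lmult (ui * (ui * (ui * uj))) (F e3)"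
    unfolding s2 unfolding X_def e3_def
    by (rule step[OF ci e2H]) (use wi e2H w3 in auto)
  have p1: "(lie_br X ^^ 1) Y = lie_br X Y" by simp
  have p2: "(lie_br X ^^ 2) Y = lie_br X (lie_br X Y)" by (simp add: numeral_2_eq_2)
  have p3: "(lie_br X ^^ 3) Y = lie_br X (lie_br X (lie_br X Y))" by (simp add: numeral_3_eq_3)
  have c1: "(lie_br X ^^ 1) Y = (\<lambda>_. 0)" if "B = 0" "a = 0"
  proof -
    have "e1 = (\<lambda>_. 0)" unfolding e1_def using that by simp
    thus ?thesis using p1 s1 by (simp add: F_zero lmult_def)
  qed
  have c2: "(lie_br X ^^ 2) Y = (\<lambda>_. 0)" if "B = 0"
  proof -
    have "e2 = (\<lambda>_. 0)" unfolding e2_def be1 using that by (simp add: e1_def algebra_simps)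
    thus ?thesis using p2 s2 by (simp add: F_zero lmult_def)
  qed
  have c2': "(lie_br X ^^ 2) Y = (\<lambda>_. 0)" if "B = - A" "a = 0"
  proof -
    have "e2 = (\<lambda>_. 0)" unfolding e2_def be1 using that by (simp add: e1_def algebra_simps)
    thus ?thesis using p2 s2 by (simp add: F_zero lmult_def)
  qed
  have c3: "(lie_br X ^^ 3) Y = (\<lambda>_. 0)" if "B = - A"
  proof -
    have b1: "bi e1 = - (2*a*A)" using be1 that by (simp add: algebra_simps)
    have b2: "bi e2 = 2*a*A*A" using be2 b1 that by (simp add: algebra_simps)
    have "e3 = (\<lambda>_. 0)" unfolding e3_def b2 unfolding e2_def b1 unfolding e1_def
      using that by (simp add: algebra_simps)
    thus ?thesis using p3 s3 by (simp add: F_zero lmult_def)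
  qed
  have "\<exists>k\<le>m. (lie_br X ^^ k) Y = (\<lambda>_. 0)"
    using cond m1 c1 c2 c2' c3 unfolding A_def B_def a_def by blast
  then obtain k where "k \<le> m" "(lie_br X ^^ k) Y = (\<lambda>_. 0)" by blast
  then show ?thesis using funpow_zero[OF ci] unfolding X_def Y_def by blast
qed

end



lemma numeric:
  fixes P Q B Bd a ad Pj Qj n :: complex
  assumes E1: "- P * Q - Q * P = 2" and E1j: "- Pj * Qj - Qj * Pj = 2"
    and E2: "- P * Bd - Q * B = n"
    and E3: "- B * ad - ad * P = 0" and E4: "- B * Qj - ad * B = 0"
    and E5: "- a * Bd - Bd * Pj = 0" and E6: "- a * Q - Bd * a = 0"
  shows "(n = 0 \<and> B = 0 \<and> a = 0 \<and> Bd = 0 \<and> ad = 0) \<or> (n = -1 \<and> B = 0 \<and> ad = 0 \<and> Bd = - Q)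
       \<or> (n = -1 \<and> B = - P \<and> Bd = 0 \<and> a = 0) \<or> (n = -2 \<and> B = - P \<and> Bd = - Q)"
proof -
  have PQ: "P * Q = -1" using E1 by (metis add.inverse_inverse add_eq_0_iff2 minus_diff_eq mult.commute mult_2 mult_minus_left diff_minus_eq_add mult_cancel_left2 zero_neq_numeral)
  have PQj: "Pj * Qj = -1" using E1j by (metis add.inverse_inverse add_eq_0_iff2 minus_diff_eq mult.commute mult_2 mult_minus_left diff_minus_eq_add mult_cancel_left2 zero_neq_numeral)
  have P0: "P \<noteq> 0" "Q \<noteq> 0" "Pj \<noteq> 0" "Qj \<noteq> 0" using PQ PQj by auto
  have e3: "ad * (B + P) = 0" using E3 by (simp add: algebra_simps neg_eq_iff_add_eq_0 eq_neg_iff_add_eq_0)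
  have e4: "B * (Qj + ad) = 0" using E4 by (simp add: algebra_simps neg_eq_iff_add_eq_0 eq_neg_iff_add_eq_0)
  have e5: "Bd * (a + Pj) = 0" using E5 by (simp add: algebra_simps neg_eq_iff_add_eq_0 eq_neg_iff_add_eq_0)
  have e6: "a * (Q + Bd) = 0" using E6 by (simp add: algebra_simps neg_eq_iff_add_eq_0 eq_neg_iff_add_eq_0)
  have hB: "(B = 0 \<and> ad = 0) \<or> (B = - P \<and> ad \<noteq> 0)"
  proof (cases "B = 0")
    case True then show ?thesis using e3 P0 by auto
  next
    case False
    then have "Qj + ad = 0" using e4 by simp
    then have "ad = - Qj" by (metis add.commute eq_neg_iff_add_eq_0)
    then have "ad \<noteq> 0" using P0 by simp
    then have "B + P = 0" using e3 by simp
    then have "B = - P" by (metis eq_neg_iff_add_eq_0)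
    then show ?thesis using \<open>ad \<noteq> 0\<close> by simp
  qed
  have hBd: "(Bd = 0 \<and> a = 0) \<or> (Bd = - Q \<and> a \<noteq> 0)"
  proof (cases "Bd = 0")
    case True then show ?thesis using e6 P0 by auto
  next
    case False
    then have "a + Pj = 0" using e5 by simp
    then have "a = - Pj" by (metis eq_neg_iff_add_eq_0)
    then have "a \<noteq> 0" using P0 by simp
    then have "Q + Bd = 0" using e6 by simp
    then have "Bd = - Q" by (metis add.commute eq_neg_iff_add_eq_0)
    then show ?thesis using \<open>a \<noteq> 0\<close> by simp
  qed
  have QP: "Q * P = -1" using PQ by (simp add: mult.commute)
  from hB hBd show ?thesis
  proof (elim disjE conjE)
    assume "B = 0" "ad = 0" "Bd = 0" "a = 0"
    then show ?thesis using E2 by simp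
  next
    assume "B = 0" "ad = 0" "Bd = - Q" "a \<noteq> 0"
    then have "n = P * Q" using E2 by simp
    then show ?thesis using PQ \<open>B = 0\<close> \<open>ad = 0\<close> \<open>Bd = - Q\<close> by simp
  next
    assume "B = - P" "ad \<noteq> 0" "Bd = 0" "a = 0"
    then have "n = Q * P" using E2 by simp
    then show ?thesis using QP \<open>B = - P\<close> \<open>Bd = 0\<close> \<open>a = 0\<close> by simp
  next
    assume "B = - P" "ad \<noteq> 0" "Bd = - Q" "a \<noteq> 0"
    then have "n = P * Q + Q * P" using E2 by simp
    then show ?thesis using QP PQ \<open>B = - P\<close> \<open>Bd = - Q\<close> by simp
  qed
qed


theorem theorem3p12:
  fixes r :: nat and N :: "nat \<Rightarrow> nat \<Rightarrow> int"
    and \<alpha> :: "nat \<Rightarrow> (nat \<Rightarrow> complex) \<Rightarrow> complex"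
    and phi :: "complex \<Rightarrow> 'a::comm_ring_1"
    and F :: "(nat \<Rightarrow> complex) \<Rightarrow> 'a \<Rightarrow> 'a"
    and v vinv :: "nat \<Rightarrow> 'a"
    and \<delta>p \<delta>m :: "nat \<Rightarrow> 'a \<Rightarrow> 'a"
  defines "s \<equiv> corank r N"
  defines "\<h> \<equiv> hspace (r + s)"
  defines "Xp \<equiv> (\<lambda>i. lmult (v i) (\<delta>p i))"
  defines "Xm \<equiv> (\<lambda>i. lmult (vinv i) (\<delta>m i))"
  assumes cartan: "gen_cartan r N"
    and alpha_lin: "\<forall>j\<in>{1..r}. \<forall>c\<in>\<h>. \<forall>d\<in>\<h>. \<forall>z. \<alpha> j (\<lambda>k. c k + z * d k) = \<alpha> j c + z * \<alpha> j d"
    and alpha_N: "\<forall>i\<in>{1..r}. \<forall>j\<in>{1..r}. \<alpha> j (Hb i) = of_int (N i j)"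
    and alpha_indep: "\<forall>l::nat \<Rightarrow> complex. (\<forall>c\<in>\<h>. (\<Sum>j=1..r. l j * \<alpha> j c) = 0)
                        \<longrightarrow> (\<forall>j\<in>{1..r}. l j = 0)"
    and phi_hom: "complex_alg_hom phi"
    and F_der: "\<forall>c\<in>\<h>. is_derivation phi (F c)"
    and F_lin: "\<forall>c\<in>\<h>. \<forall>d\<in>\<h>. \<forall>z. F (\<lambda>k. c k + z * d k) = (\<lambda>b. F c b + phi z * F d b)"
    and F_br: "\<forall>c\<in>\<h>. \<forall>d\<in>\<h>. lie_br (F c) (F d) = (\<lambda>_. 0)"
    and v_inv: "\<forall>i\<in>{1..r}. v i * vinv i = 1"
    and F_v: "\<forall>i\<in>{1..r}. \<forall>c\<in>\<h>. F c (v i) = phi (\<alpha> i c) * v i"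
    and \<delta>p_im: "\<forall>i\<in>{1..r}. \<exists>c\<in>\<h>. \<delta>p i = F c"
    and \<delta>m_im: "\<forall>i\<in>{1..r}. \<exists>c\<in>\<h>. \<delta>m i = F c"
    and rel_H: "\<forall>i\<in>{1..r}. lie_br (Xp i) (Xm i) = F (Hb i)"
    and rel_0: "\<forall>i\<in>{1..r}. \<forall>j\<in>{1..r}. i \<noteq> j \<longrightarrow> lie_br (Xp i) (Xm j) = (\<lambda>_. 0)"
  shows "\<forall>i\<in>{1..r}. \<forall>j\<in>{1..r}. i \<noteq> j \<longrightarrow>
           ((lie_br (Xp i)) ^^ nat (1 - N i j)) (Xp j) = (\<lambda>_. 0) \<and>
           ((lie_br (Xm i)) ^^ nat (1 - N i j)) (Xm j) = (\<lambda>_. 0)"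
proof (cases "(1::'a) = 0")
  case True
  have all0: "x = 0" for x :: 'a using True by (metis mult_1_right mult_zero_right)
  have "f = (\<lambda>_. 0)" for f :: "'a \<Rightarrow> 'a" by (rule ext) (rule all0)
  then show ?thesis by blast
next
  case False
  have H_zero: "(\<lambda>_. 0) \<in> \<h>" unfolding \<h>_def hspace_def by simp
  have H_comb: "\<forall>c\<in>\<h>. \<forall>d\<in>\<h>. \<forall>x y. (\<lambda>k. x * c k + y * d k) \<in> \<h>"
    unfolding \<h>_def hspace_def by simp
  interpret D: dctx phi F \<h>
    by unfold_locales (use phi_hom F_der F_lin F_br H_zero H_comb in auto)
  have phi_inj: "z = 0" if "phi z = 0" for z
  proof (rule ccontr)
    assume "z \<noteq> 0"
    then have "phi z * phi (inverse z) = 1" by (simp add: D.phi_mult[symmetric] D.phi_1)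
    then show False using that False by simp
  qed
  have extr: "x = y" if "phi x * u = phi y * u" "u * w = 1" for x y u w
  proof -
    have "phi x * (u * w) = phi y * (u * w)" using that(1) by (metis mult.assoc)
    then have "phi x = phi y" using that(2) by simp
    then have "phi (x - y) = 0" using D.phi_add[of x "- y"] D.phi_neg[of y] by simp
    then have "x - y = 0" by (rule phi_inj)
    then show ?thesis by simp
  qed
  define cp where "cp i = (SOME c. c \<in> \<h> \<and> \<delta>p i = F c)" for i
  have cp: "\<forall>i\<in>{1..r}. cp i \<in> \<h> \<and> \<delta>p i = F (cp i)"
  proof
    fix i assume i: "i \<in> {1..r}"
    then have "\<exists>c. c \<in> \<h> \<and> \<delta>p i = F c" using \<delta>p_im by blast
    then show "cp i \<in> \<h> \<and> \<delta>p i = F (cp i)" unfolding cp_def by (rule someI_ex)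
  qed
  define cm where "cm i = (SOME c. c \<in> \<h> \<and> \<delta>m i = F c)" for i
  have cm: "\<forall>i\<in>{1..r}. cm i \<in> \<h> \<and> \<delta>m i = F (cm i)"
  proof
    fix i assume i: "i \<in> {1..r}"
    then have "\<exists>c. c \<in> \<h> \<and> \<delta>m i = F c" using \<delta>m_im by blast
    then show "cm i \<in> \<h> \<and> \<delta>m i = F (cm i)" unfolding cm_def by (rule someI_ex)
  qed
  have Xp_eq: "Xp i = lmult (v i) (F (cp i))" if "i \<in> {1..r}" for i
    using cp that by (simp add: Xp_def)
  have Xm_eq: "Xm i = lmult (vinv i) (F (cm i))" if "i \<in> {1..r}" for i
    using cm that by (simp add: Xm_def)
  have a0: "\<alpha> k (\<lambda>_. 0) = 0" if "k \<in> {1..r}" for k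
    using alpha_lin[rule_format, OF that H_zero H_zero, of 1] by simp
  have alin: "\<forall>c\<in>\<h>. \<forall>d\<in>\<h>. \<forall>x y. \<alpha> k (\<lambda>l. x * c l + y * d l) = x * \<alpha> k c + y * \<alpha> k d"
    if k: "k \<in> {1..r}" for k
  proof (intro ballI allI)
    fix c d x y assume c: "c \<in> \<h>" and d: "d \<in> \<h>"
    have cx: "(\<lambda>l. x * c l) \<in> \<h>" using H_comb[rule_format, OF c c, of x 0] by simp
    have "\<alpha> k (\<lambda>l. 0 + x * c l) = \<alpha> k (\<lambda>_. 0) + x * \<alpha> k c"
      using alpha_lin[rule_format, OF k H_zero c] by simp
    then have 1: "\<alpha> k (\<lambda>l. x * c l) = x * \<alpha> k c" using a0[OF k] by simp
    show "\<alpha> k (\<lambda>l. x * c l + y * d l) = x * \<alpha> k c + y * \<alpha> k d"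
      using alpha_lin[rule_format, OF k cx d, of y] 1 by simp
  qed
  have alin': "\<forall>c\<in>\<h>. \<forall>d\<in>\<h>. \<forall>x y. (\<lambda>e. - \<alpha> k e) (\<lambda>l. x * c l + y * d l)
      = x * (\<lambda>e. - \<alpha> k e) c + y * (\<lambda>e. - \<alpha> k e) d"
    if k: "k \<in> {1..r}" for k
    using alin[OF k] by (simp add: algebra_simps)
  have wv: "\<forall>e\<in>\<h>. F e (v k) = phi (\<alpha> k e) * v k" if "k \<in> {1..r}" for k
    using F_v that by blast
  have wvi: "\<forall>e\<in>\<h>. F e (vinv k) = phi ((\<lambda>e. - \<alpha> k e) e) * vinv k" if k: "k \<in> {1..r}" for k
  proof
    fix e assume e: "e \<in> \<h>"
    have "F e 1 = 0" using D.der_mult[OF e, of 1 1] by simp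
    then have "F e (v k * vinv k) = 0" using v_inv k by simp
    then have "v k * F e (vinv k) + phi (\<alpha> k e) * v k * vinv k = 0"
      using D.der_mult[OF e] wv[OF k] e by simp
    then have "vinv k * (v k * F e (vinv k) + phi (\<alpha> k e) * v k * vinv k) = 0" by simp
    moreover have "vinv k * (v k * F e (vinv k) + phi (\<alpha> k e) * v k * vinv k)
       = (v k * vinv k) * F e (vinv k) + phi (\<alpha> k e) * vinv k * (v k * vinv k)"
      by (simp add: algebra_simps)
    ultimately have "F e (vinv k) + phi (\<alpha> k e) * vinv k = 0"
      using v_inv k by simp
    then show "F e (vinv k) = phi ((\<lambda>e. - \<alpha> k e) e) * vinv k"
      by (simp add: D.phi_neg eq_neg_iff_add_eq_0)
  qed
  define G where "G k l = F (\<lambda>t. (- \<alpha> l (cp k)) * cm l t + (- \<alpha> k (cm l)) * cp k t)" for k l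
  have br: "lie_br (Xp k) (Xm l) = lmult (v k * vinv l) (G k l)" if "k \<in> {1..r}" "l \<in> {1..r}" for k l
    unfolding Xp_eq[OF that(1)] Xm_eq[OF that(2)] G_def
    by (rule D.step) (use cp cm that wv wvi in auto)
  have Gv: "G k l (v q) = phi (- \<alpha> l (cp k) * \<alpha> q (cm l) - \<alpha> k (cm l) * \<alpha> q (cp k)) * v q"
    if "k \<in> {1..r}" "l \<in> {1..r}" "q \<in> {1..r}" for k l q
  proof -
    have "G k l (v q) = phi (- \<alpha> l (cp k)) * F (cm l) (v q) + phi (- \<alpha> k (cm l)) * F (cp k) (v q)"
      unfolding G_def by (rule D.F_comb) (use cp cm that in auto)
    also have "\<dots> = (phi (- \<alpha> l (cp k)) * phi (\<alpha> q (cm l)) + phi (- \<alpha> k (cm l)) * phi (\<alpha> q (cp k))) * v q"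
      using wv[OF that(3)] cp cm that by (simp add: algebra_simps)
    also have "\<dots> = phi (- \<alpha> l (cp k) * \<alpha> q (cm l) + (- \<alpha> k (cm l) * \<alpha> q (cp k))) * v q"
      by (simp only: D.phi_add D.phi_mult)
    finally show ?thesis by simp
  qed
  have HbH: "Hb k \<in> \<h>" if "k \<in> {1..r}" for k
    using that unfolding \<h>_def hspace_def Hb_def by auto
  have numH: "- \<alpha> k (cp k) * \<alpha> q (cm k) - \<alpha> k (cm k) * \<alpha> q (cp k) = of_int (N k q)"
    if k: "k \<in> {1..r}" and q: "q \<in> {1..r}" for k q
  proof -
    have "G k k = F (Hb k)" using rel_H br[OF k k] v_inv k by (simp add: lmult_def)
    then have "G k k (v q) = phi (of_int (N k q)) * v q"
      using F_v HbH[OF k] alpha_N k q by simp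
    then have "phi (- \<alpha> k (cp k) * \<alpha> q (cm k) - \<alpha> k (cm k) * \<alpha> q (cp k)) * v q
        = phi (of_int (N k q)) * v q" using Gv[OF k k q] by simp
    then show ?thesis by (rule extr[where w="vinv q"]) (use v_inv q in simp)
  qed
  have num0: "- \<alpha> l (cp k) * \<alpha> q (cm l) - \<alpha> k (cm l) * \<alpha> q (cp k) = 0"
    if k: "k \<in> {1..r}" and l: "l \<in> {1..r}" and q: "q \<in> {1..r}" and kl: "k \<noteq> l" for k l q
  proof -
    have "lmult (v k * vinv l) (G k l) = (\<lambda>_. 0)" using rel_0 br[OF k l] k l kl by simp
    then have "lmult (v k * vinv l) (G k l) (v q) = 0" by simp
    then have "(v k * vinv l) * G k l (v q) = 0" unfolding lmult_def .
    then have "(vinv k * v l) * ((v k * vinv l) * G k l (v q)) = 0" by simp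
    moreover have "(vinv k * v l) * ((v k * vinv l) * G k l (v q))
       = (v k * vinv k) * (v l * vinv l) * G k l (v q)" by (simp add: ac_simps)
    ultimately have "G k l (v q) = 0" using v_inv k l by simp
    then have "phi (- \<alpha> l (cp k) * \<alpha> q (cm l) - \<alpha> k (cm l) * \<alpha> q (cp k)) * v q = phi 0 * v q"
      using Gv[OF k l q] by (simp add: D.phi_0)
    then show ?thesis by (rule extr[where w="vinv q"]) (use v_inv q in simp)
  qed
  show ?thesis
  proof (intro ballI impI)
    fix i j assume i: "i \<in> {1..r}" and j: "j \<in> {1..r}" and ij: "i \<noteq> j"
    have N2: "N k k = 2" if "k \<in> {1..r}" for k using cartan that by (simp add: gen_cartan_def)
    have E1: "- \<alpha> i (cp i) * \<alpha> i (cm i) - \<alpha> i (cm i) * \<alpha> i (cp i) = 2"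
      using numH[OF i i] N2[OF i] by simp
    have E1j: "- \<alpha> j (cp j) * \<alpha> j (cm j) - \<alpha> j (cm j) * \<alpha> j (cp j) = 2"
      using numH[OF j j] N2[OF j] by simp
    note nm = numeric[OF E1 E1j numH[OF i j] num0[OF i j i ij] num0[OF i j j ij]
        num0[OF j i j ij[symmetric]] num0[OF j i i ij[symmetric]]]
    define m where "m = nat (1 - N i j)"
    have N0: "N i j = 0" if "of_int (N i j) = (0::complex)" using that by simp
    have N1: "N i j = -1" if "of_int (N i j) = (-1::complex)"
      using that by (metis of_int_eq_iff of_int_minus of_int_1)
    have N2': "N i j = -2" if "of_int (N i j) = (-2::complex)"
      using that by (metis of_int_eq_iff of_int_minus of_int_numeral)
    have conds: "((\<alpha> j (cp i) = 0 \<and> (\<alpha> i (cp j) = 0 \<or> 2 \<le> m)) \<or>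
        (\<alpha> j (cp i) = - \<alpha> i (cp i) \<and> (3 \<le> m \<or> (\<alpha> i (cp j) = 0 \<and> 2 \<le> m)))) \<and>
        (((\<lambda>e. - \<alpha> j e) (cm i) = 0 \<and> ((\<lambda>e. - \<alpha> i e) (cm j) = 0 \<or> 2 \<le> m)) \<or>
        ((\<lambda>e. - \<alpha> j e) (cm i) = - (\<lambda>e. - \<alpha> i e) (cm i) \<and>
          (3 \<le> m \<or> ((\<lambda>e. - \<alpha> i e) (cm j) = 0 \<and> 2 \<le> m)))) \<and> 1 \<le> m"
      using nm
    proof (elim disjE conjE)
      assume h: "of_int (N i j) = (0::complex)" "\<alpha> j (cp i) = 0" "\<alpha> i (cp j) = 0"
        "\<alpha> j (cm i) = 0" "\<alpha> i (cm j) = 0"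
      have "m = 1" using N0[OF h(1)] by (simp add: m_def)
      then show ?thesis using h by simp
    next
      assume h: "of_int (N i j) = (-1::complex)" "\<alpha> j (cp i) = 0" "\<alpha> i (cm j) = 0"
        "\<alpha> j (cm i) = - \<alpha> i (cm i)"
      have "m = 2" using N1[OF h(1)] by (simp add: m_def)
      then show ?thesis using h by simp
    next
      assume h: "of_int (N i j) = (-1::complex)" "\<alpha> j (cp i) = - \<alpha> i (cp i)" "\<alpha> j (cm i) = 0"
        "\<alpha> i (cp j) = 0"
      have "m = 2" using N1[OF h(1)] by (simp add: m_def)
      then show ?thesis using h by simp
    next
      assume h: "of_int (N i j) = (-2::complex)" "\<alpha> j (cp i) = - \<alpha> i (cp i)"
        "\<alpha> j (cm i) = - \<alpha> i (cm i)"
      have "m = 3" using N2'[OF h(1)] by (simp add: m_def)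
      then show ?thesis using h by simp
    qed
    note condP = conds[THEN conjunct1] and condM = conds[THEN conjunct2, THEN conjunct1]
      and m1 = conds[THEN conjunct2, THEN conjunct2]
    have ci: "cp i \<in> \<h>" "cp j \<in> \<h>" "cm i \<in> \<h>" "cm j \<in> \<h>" using cp cm i j by auto
    have P: "(lie_br (lmult (v i) (F (cp i))) ^^ m) (lmult (v j) (F (cp j))) = (\<lambda>_. 0)"
      by (rule D.nil[OF ci(1,2) wv[OF i] wv[OF j] alin[OF i] condP m1])
    have M: "(lie_br (lmult (vinv i) (F (cm i))) ^^ m) (lmult (vinv j) (F (cm j))) = (\<lambda>_. 0)"
      by (rule D.nil[OF ci(3,4) wvi[OF i] wvi[OF j] alin'[OF i] condM m1])
    show "(lie_br (Xp i) ^^ nat (1 - N i j)) (Xp j) = (\<lambda>_. 0) \<and>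
          (lie_br (Xm i) ^^ nat (1 - N i j)) (Xm j) = (\<lambda>_. 0)"
      using P M unfolding m_def Xp_eq[OF i] Xp_eq[OF j] Xm_eq[OF i] Xm_eq[OF j] by simp
  qed
qed

end
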